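(* Let $N\ge2$ and suppose $U$ satisfies Assumption (U), $G$ satisfies Assumption (G1) (see context), and $\sum_{i=1}^NU(q_i)+\sum_{1\le i<j\le N}G(q_i-q_j)\ge1$ for all $\mathbf{q}\in\mathcal{D}$. Then there exist positive constants $c_G$ (small) and $C_G$ (large) independent of $\mathbf{q}$ such that for all $\mathbf{q}=(q_1,\dots,q_N)\in\mathcal{D}$, $$C_G\Big[\sum_{i=1}^NU(q_i)+\sum_{1\le i<j\le N}G(q_i-q_j)\Big]\ge\sum_{i=1}^N|q_i|-c_G\sum_{1\le i<j\le N}\log|q_i-q_j|\ge c_G\sum_{i=1}^N|q_i|+c_G\max\{-\log|q_i-q_j|:1\le i<j\le N\}.$$
   Context: $\mathcal{D}=\{\mathbf{q}\in(\mathbb{R}^d)^N:q_i\ne q_j\text{ for }i\ne j\}$. Assumption (U): $U\in C^\infty(\mathbb{R}^d;[1,\infty))$ and there are constants $a_1>0$, $\lambda\ge1$, $a_2,a_3>0$ such that for all $q$: $\frac{1}{a_1}|q|^{\lambda+1}-a_1\le |U(q)|\le a_1(1+|q|^{\lambda+1})$, $|\nabla U(q)|\le a_1(1+|q|^\lambda)$, $\langle\nabla U(q),q\rangle\ge a_2|q|^{\lambda+1}-a_3$. Assumption (G1): $G\in C^\infty(\mathbb{R}^d\setminus\{0\};\mathbb{R})$, $G(q)\to\infty$ as $|q|\to0$, $G$ even, $\nabla G$ odd; there is $\beta_1\ge1$ with $|G(q)|\le a_1(1+|q|+|q|^{-\beta_1})$, $|\nabla G(q)|\le a_1(1+|q|^{-\beta_1})$;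 and constants $\beta_2\in[0,\beta_1)$, $a_4>0$, $a_5\in\mathbb{R}$, $a_6>0$ with $\big|\nabla G(q)+a_4\frac{q}{|q|^{\beta_1+1}}+a_5\frac{q}{|q|^{\beta_2+1}}\big|\le a_6$ for $q\ne0$. *)

theory Defs
  imports "HOL-Analysis.Analysis"
begin

fun Ck_on :: "nat \<Rightarrow> 'a::euclidean_space set \<Rightarrow> ('a \<Rightarrow> real) \<Rightarrow> bool" where
  "Ck_on 0 S f = continuous_on S f"
| "Ck_on (Suc k) S f =
     ((\<forall>x\<in>S. f differentiable (at x)) \<and>
      (\<forall>v. Ck_on k S (\<lambda>x. frechet_derivative f (at x) v)))"

definition smooth_on :: "'a::euclidean_space set \<Rightarrow> ('a \<Rightarrow> real) \<Rightarrow> bool" where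
  "smooth_on S f \<longleftrightarrow> (\<forall>k. Ck_on k S f)"

definition grad :: "('a::euclidean_space \<Rightarrow> real) \<Rightarrow> 'a \<Rightarrow> 'a" where
  "grad f x = (\<Sum>b\<in>Basis. frechet_derivative f (at x) b *\<^sub>R b)"

end

theory Submission
  imports Defs
begin

lemma smooth_diff: "smooth_on S f \<Longrightarrow> x \<in> S \<Longrightarrow> f differentiable (at x)"
proof -
  assume "smooth_on S f" "x \<in> S"
  then have "Ck_on (Suc 0) S f" unfolding smooth_on_def by blast
  then show ?thesis using \<open>x \<in> S\<close> by simp
qed

lemma grad_inner:
  fixes f :: "'a::euclidean_space \<Rightarrow> real"
  assumes "f differentiable (at x)"
  shows "grad f x \<bullet> u = frechet_derivative f (at x) u"
proof -
  have lin: "linear (frechet_derivative f (at x))"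
    using assms by (rule linear_frechet_derivative)
  have "frechet_derivative f (at x) u = frechet_derivative f (at x) (\<Sum>b\<in>Basis. (u \<bullet> b) *\<^sub>R b)"
    by (simp add: euclidean_representation)
  also have "\<dots> = (\<Sum>b\<in>Basis. (u \<bullet> b) * frechet_derivative f (at x) b)"
    using lin by (simp add: linear_sum linear_scale)
  also have "\<dots> = grad f x \<bullet> u"
    unfolding grad_def by (simp add: inner_sum_right inner_commute mult.commute)
  finally show ?thesis by simp
qed

lemma ray_deriv:
  fixes G :: "'a::euclidean_space \<Rightarrow> real"
  assumes "G differentiable (at (t *\<^sub>R u))"
  shows "((\<lambda>s. G (s *\<^sub>R u)) has_real_derivative (grad G (t *\<^sub>R u) \<bullet> u)) (at t)"
proof -
  let ?G' = "frechet_derivative G (at (t *\<^sub>R u))"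
  have d1: "((\<lambda>s. s *\<^sub>R u) has_derivative (\<lambda>s. s *\<^sub>R u)) (at t)"
    by (rule bounded_linear_imp_has_derivative[OF bounded_linear_scaleR_left])
  have d2: "(G has_derivative ?G') (at (t *\<^sub>R u))"
    using assms frechet_derivative_works by blast
  have "((\<lambda>s. G (s *\<^sub>R u)) has_derivative (\<lambda>s. ?G' (s *\<^sub>R u))) (at t)"
    using has_derivative_compose[OF d1 d2] by simp
  moreover have lin: "linear ?G'" using assms by (rule linear_frechet_derivative)
  then have "(\<lambda>s. ?G' (s *\<^sub>R u)) = (*) (?G' u)"
    by (auto simp: fun_eq_iff linear_scale mult.commute)
  ultimately show ?thesis
    unfolding has_field_derivative_def using grad_inner[OF assms] by simp
qed

lemma deriv_bound:
  fixes G :: "'a::euclidean_space \<Rightarrow> real"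
  assumes beta1: "beta1 \<ge> 1" and beta2: "0 \<le> beta2" "beta2 < beta1"
    and a4: "a4 > 0" and a6: "a6 > 0"
    and G_asym: "\<forall>q. q \<noteq> 0 \<longrightarrow>
        norm (grad G q + (a4 / norm q powr (beta1 + 1)) *\<^sub>R q
                       + (a5 / norm q powr (beta2 + 1)) *\<^sub>R q) \<le> a6"
    and t: "0 < t" "t \<le> 1" "a6 * t \<le> a4 / 4" "\<bar>a5\<bar> * t powr (beta1 - beta2) \<le> a4 / 4"
    and u: "norm u = 1"
  shows "grad G (t *\<^sub>R u) \<bullet> u + (a4 / 2) / t \<le> 0"
proof -
  define x where "x = t *\<^sub>R u"
  have nx: "norm x = t" using t u by (simp add: x_def)
  have x0: "x \<noteq> 0" using nx t by auto
  define A where "A = a4 / t powr (beta1 + 1)"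
  define B where "B = a5 / t powr (beta2 + 1)"
  define V where "V = grad G x + A *\<^sub>R x + B *\<^sub>R x"
  have nV: "norm V \<le> a6" using G_asym x0 nx unfolding V_def A_def B_def by metis
  have "V \<bullet> u \<le> norm V * norm u" by (rule norm_cauchy_schwarz)
  then have Vu: "V \<bullet> u \<le> a6" using nV u by simp
  have xu: "x \<bullet> u = t" using u by (simp add: x_def dot_square_norm)
  have "V \<bullet> u = grad G x \<bullet> u + A * t + B * t"
    unfolding V_def by (simp add: inner_add_left xu)
  define p1 where "p1 = t powr beta1"
  define p2 where "p2 = t powr beta2"
  define pe where "pe = t powr (beta1 - beta2)"
  have p1pos: "p1 > 0" and p2pos: "p2 > 0" and pepos: "pe > 0" using t by (auto simp: p1_def p2_def pe_def)
  have p12: "p1 = p2 * pe" unfolding p1_def p2_def pe_def using t by (simp add: powr_add[symmetric])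
  have At: "A * t = a4 / p1" unfolding A_def p1_def using t by (simp add: powr_add)
  have Bt: "B * t = a5 / p2" unfolding B_def p2_def using t by (simp add: powr_add)
  have p1t: "p1 \<le> t" unfolding p1_def using t beta1
    by (metis powr_one_gt_zero_iff powr_mono' less_eq_real_def not_less) 
  have g: "grad G x \<bullet> u \<le> a6 - a4 / p1 - a5 / p2"
    using Vu \<open>V \<bullet> u = _\<close> At Bt by linarith
  have h1: "(a4/2)/t \<le> (a4/2)/p1" using p1t p1pos a4 by (intro divide_left_mono) auto
  have h2: "a6 \<le> (a4/4)/p1" using p1t p1pos a6 t
    by (simp add: field_simps) (smt (verit) mult_left_mono)
  have h3: "- a5 / p2 \<le> (a4/4)/p1"
  proof -
    have "- a5 / p2 \<le> \<bar>a5\<bar> / p2" using p2pos by (metis abs_ge_minus_self divide_minus_left divide_right_mono less_eq_real_def)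
    also have "\<dots> = \<bar>a5\<bar> * pe / p1" using p12 pepos by simp
    also have "\<dots> \<le> (a4/4)/p1" using t(4) p1pos unfolding pe_def by (intro divide_right_mono) auto
    finally show ?thesis .
  qed
  show ?thesis using g h1 h2 h3 unfolding x_def by (simp add: field_simps)
qed

lemma G_lower:
  fixes G :: "'a::euclidean_space \<Rightarrow> real"
  assumes G_smooth: "smooth_on (UNIV - {0}) G"
    and a1: "a1 > 0"
    and beta1: "beta1 \<ge> 1" and beta2: "0 \<le> beta2" "beta2 < beta1"
    and a4: "a4 > 0" and a6: "a6 > 0"
    and G_bound: "\<forall>q. q \<noteq> 0 \<longrightarrow> \<bar>G q\<bar> \<le> a1 * (1 + norm q + norm q powr (- beta1))"
    and G_asym: "\<forall>q. q \<noteq> 0 \<longrightarrow>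
        norm (grad G q + (a4 / norm q powr (beta1 + 1)) *\<^sub>R q
                       + (a5 / norm q powr (beta2 + 1)) *\<^sub>R q) \<le> a6"
  shows "\<exists>C. \<forall>q. q \<noteq> 0 \<longrightarrow> - (a4/2) * ln (norm q) \<le> G q + C + a1 * norm q"
proof -
  define e where "e = beta1 - beta2"
  have e: "e > 0" using beta2 by (simp add: e_def)
  define r where "r = a4 / (4 * (\<bar>a5\<bar> + 1))"
  have r: "r > 0" using a4 by (simp add: r_def add_pos_nonneg)
  define d where "d = min (min 1 (a4 / (4 * a6))) (r powr (1 / e))"
  have d0: "d > 0" using a4 a6 r by (simp add: d_def)
  have d1: "d \<le> 1" by (simp add: d_def)
  have d6: "a6 * d \<le> a4 / 4"
  proof -
    have "d \<le> a4 / (4 * a6)" by (simp add: d_def)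
    then show ?thesis using a6 by (simp add: field_simps)
  qed
  have de: "d powr e \<le> r"
  proof -
    have "d \<le> r powr (1 / e)" by (simp add: d_def)
    then have "d powr e \<le> (r powr (1 / e)) powr e" using d0 e by (intro powr_mono2) auto
    also have "\<dots> = r" using e r by (simp add: powr_powr)
    finally show ?thesis .
  qed
  define k where "k = a4 / 2"
  have DB: "grad G (t *\<^sub>R u) \<bullet> u + k / t \<le> 0" if "0 < t" "t \<le> d" "norm u = 1" for t u
  proof -
    have "t powr e \<le> d powr e" using that e by (intro powr_mono2) auto
    then have "\<bar>a5\<bar> * t powr e \<le> \<bar>a5\<bar> * r" using de by (intro mult_left_mono) auto
    also have "\<dots> \<le> a4 / 4" unfolding r_def using a4
      by (simp add: field_simps)
    finally have h: "\<bar>a5\<bar> * t powr (beta1 - beta2) \<le> a4 / 4" by (simp add: e_def)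
    have "a6 * t \<le> a4 / 4" using d6 that a6 by (smt (verit) mult_left_mono)
    then show ?thesis unfolding k_def
      using deriv_bound[OF beta1 beta2 a4 a6 G_asym that(1) _ _ h that(3)] that d1 by simp
  qed
  define C where "C = a1 * (1 + d + d powr (- beta1)) - k * ln d"
  have "- k * ln (norm q) \<le> G q + C + a1 * norm q" if q: "q \<noteq> 0" for q
  proof (cases "norm q \<le> d")
    case True
    define u where "u = q /\<^sub>R norm q"
    have u: "norm u = 1" using q by (simp add: u_def)
    have qu: "q = norm q *\<^sub>R u" using q by (simp add: u_def)
    define f where "f s = G (s *\<^sub>R u) + k * ln s" for s
    have "f (norm q) \<ge> f d"
    proof (rule DERIV_nonpos_imp_nonincreasing[OF True])
      fix s assume s: "norm q \<le> s" "s \<le> d"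
      have s0: "s > 0" using s q using norm_ge_zero[of q] by (smt (verit) zero_less_norm_iff)
      have "s *\<^sub>R u \<noteq> 0" using s0 u by auto
      then have dif: "G differentiable (at (s *\<^sub>R u))" using smooth_diff[OF G_smooth] by blast
      have "(f has_real_derivative (grad G (s *\<^sub>R u) \<bullet> u + k * inverse s)) (at s)"
      proof -
        have 2: "((\<lambda>s. k * ln s) has_real_derivative k * inverse s) (at s)"
          using s0 by (auto intro!: derivative_eq_intros simp: divide_inverse)
        show ?thesis unfolding f_def using DERIV_add[OF ray_deriv[OF dif] 2] by simp
      qed
      then show "\<exists>y. (f has_real_derivative y) (at s) \<and> y \<le> 0"
        using DB[OF s0 s(2) u] by (auto simp: divide_inverse)
    qed
    then have "G q + k * ln (norm q) \<ge> G (d *\<^sub>R u) + k * ln d"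
      unfolding f_def using qu by metis
    moreover have "\<bar>G (d *\<^sub>R u)\<bar> \<le> a1 * (1 + d + d powr (- beta1))"
      using G_bound[rule_format, of "d *\<^sub>R u"] d0 u
      proof -
        have "d *\<^sub>R u \<noteq> 0" "norm (d *\<^sub>R u) = d" using d0 u by auto
        then show ?thesis using G_bound by metis
      qed
    ultimately show ?thesis unfolding C_def using a1 q mult_nonneg_nonneg[OF less_imp_le[OF a1] norm_ge_zero[of q]]
        abs_ge_self[of "G (d *\<^sub>R u)"] abs_ge_minus_self[of "G (d *\<^sub>R u)"]
      by linarith
  next
    case False
    have nq: "norm q > d" using False by simp
    have "norm q powr (- beta1) \<le> d powr (- beta1)"
      using nq d0 beta1 by (intro powr_mono2') auto
    then have "\<bar>G q\<bar> \<le> a1 * (1 + norm q + d powr (- beta1))"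
      using G_bound q a1 by (smt (verit) mult_left_mono)
    moreover have "k * ln d \<le> k * ln (norm q)"
      using nq d0 a4 unfolding k_def by (intro mult_left_mono ln_mono) auto
    ultimately show ?thesis unfolding C_def using a1 d0 mult_pos_pos[OF a1 d0] abs_ge_minus_self[of "G q"]
      by (simp add: algebra_simps) (smt (verit) mult_pos_pos)
  qed
  then show ?thesis unfolding k_def by blast
qed

lemma lin_aux: "(A::real) - a \<le> u \<Longrightarrow> s \<le> A/2 + c \<Longrightarrow> bn \<le> s + e \<Longrightarrow> bn \<le> u/2 + (e + c + a/2)"
  by linarith

lemma U_lin:
  fixes U :: "'a::euclidean_space \<Rightarrow> real"
  assumes U_ge1: "\<forall>q. U q \<ge> 1" and a1: "a1 > 0" and lam: "lam \<ge> 1"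
    and U_growth: "\<forall>q. norm q powr (lam + 1) / a1 - a1 \<le> \<bar>U q\<bar> \<and>
                        \<bar>U q\<bar> \<le> a1 * (1 + norm q powr (lam + 1))"
  shows "b * norm x \<le> U x / 2 + (a1 * b^2 / 2 + 1 / (2 * a1) + a1 / 2)"
proof -
  define n where "n = norm x"
  have n0: "n \<ge> 0" by (simp add: n_def)
  have pw: "n powr (lam + 1) \<ge> n^2 - 1"
  proof (cases "n \<ge> 1")
    case True
    then have "n powr 2 \<le> n powr (lam + 1)" using lam by (intro powr_mono) auto
    moreover have "n powr 2 = n^2" using True by (simp add: powr_numeral)
    ultimately show ?thesis by simp
  next
    case False
    then have "n^2 \<le> 1" using n0 by (simp add: power_le_one)
    then show ?thesis by (smt (verit) powr_ge_zero)
  qed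
  have "U x \<ge> n powr (lam + 1) / a1 - a1"
    using U_growth U_ge1 unfolding n_def by (smt (verit))
  moreover have "n^2 / (2 * a1) \<le> (n powr (lam + 1) / a1) / 2 + 1 / (2 * a1)"
  proof -
    have "n^2 / (2 * a1) \<le> (n powr (lam + 1) + 1) / (2 * a1)"
      using pw a1 by (intro divide_right_mono) auto
    also have "\<dots> = (n powr (lam + 1) / a1) / 2 + 1 / (2 * a1)"
      by (simp add: add_divide_distrib)
    finally show ?thesis .
  qed
  moreover have "b * n \<le> n^2 / (2 * a1) + a1 * b^2 / 2"
  proof -
    have "0 \<le> (n - a1 * b)^2" by simp
    then have "2 * a1 * b * n \<le> n^2 + a1^2 * b^2" by (simp add: power2_eq_square algebra_simps)
    then show ?thesis using a1 by (simp add: field_simps power2_eq_square)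
  qed
  ultimately show ?thesis unfolding n_def using lin_aux by blast
qed

lemma dsum_mono:
  fixes f g :: "nat \<Rightarrow> nat \<Rightarrow> real"
  assumes "\<And>i j. 1 \<le> i \<Longrightarrow> i < j \<Longrightarrow> j \<le> N \<Longrightarrow> f i j \<le> g i j"
  shows "(\<Sum>i=1..N. \<Sum>j=i+1..N. f i j) \<le> (\<Sum>i=1..N. \<Sum>j=i+1..N. g i j)"
  using assms by (intro sum_mono) auto

lemma dsum_lin2:
  fixes f g :: "nat \<Rightarrow> nat \<Rightarrow> real"
  shows "(\<Sum>i=1..N. \<Sum>j=i+1..N. a * f i j + b * g i j) =
    a * (\<Sum>i=1..N. \<Sum>j=i+1..N. f i j) + b * (\<Sum>i=1..N. \<Sum>j=i+1..N. g i j)"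
  by (simp add: sum.distrib sum_distrib_left)

lemma dsum_lin3:
  fixes f g h :: "nat \<Rightarrow> nat \<Rightarrow> real"
  shows "(\<Sum>i=1..N. \<Sum>j=i+1..N. a * f i j + b * g i j + c * h i j) =
    a * (\<Sum>i=1..N. \<Sum>j=i+1..N. f i j) + b * (\<Sum>i=1..N. \<Sum>j=i+1..N. g i j)
    + c * (\<Sum>i=1..N. \<Sum>j=i+1..N. h i j)"
  by (simp add: sum.distrib sum_distrib_left)

lemma le_mult_E: "0 \<le> x \<Longrightarrow> 1 \<le> E \<Longrightarrow> x \<le> x * (E::real)"
  by (metis mult_left_mono mult.right_neutral)

lemma dsum_T:
  fixes x :: "nat \<Rightarrow> real"
  assumes "\<And>i. 0 \<le> x i"
  shows "(\<Sum>i=1..N. \<Sum>j=i+1..N. x i + x j) \<le> 2 * real N * (\<Sum>i=1..N. x i)"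
proof -
  have "(\<Sum>i=1..N. \<Sum>j=i+1..N. x i + x j) \<le> (\<Sum>i=1..N. \<Sum>j=1..N. x i + x j)"
    using assms by (intro sum_mono sum_mono2) (auto simp: add_nonneg_nonneg)
  also have "\<dots> = 2 * real N * (\<Sum>i=1..N. x i)"
    by (simp add: sum.distrib sum_distrib_left[symmetric] sum_distrib_right[symmetric] algebra_simps)
  finally show ?thesis .
qed

lemma dsum_member:
  fixes f :: "nat \<Rightarrow> nat \<Rightarrow> real"
  assumes "\<And>i j. 0 \<le> f i j" "1 \<le> i0" "i0 < j0" "j0 \<le> N"
  shows "f i0 j0 \<le> (\<Sum>i=1..N. \<Sum>j=i+1..N. f i j)"
proof -
  have "f i0 j0 \<le> (\<Sum>j=i0+1..N. f i0 j)"
    using assms by (intro member_le_sum) auto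
  also have "\<dots> \<le> (\<Sum>i=1..N. \<Sum>j=i+1..N. f i j)"
    using assms by (intro member_le_sum[where f = "\<lambda>i. \<Sum>j=i+1..N. f i j"] sum_nonneg) auto
  finally show ?thesis .
qed

theorem lemmaA3:
  fixes U G :: "'a::euclidean_space \<Rightarrow> real"
    and N :: nat
    and a1 lam a2 a3 beta1 beta2 a4 a5 a6 :: real
  assumes N: "N \<ge> 2"
    (* Assumption (U) *)
    and U_smooth: "smooth_on UNIV U"
    and U_ge1: "\<forall>q. U q \<ge> 1"
    and a1: "a1 > 0" and lam: "lam \<ge> 1" and a2: "a2 > 0" and a3: "a3 > 0"
    and U_growth: "\<forall>q. norm q powr (lam + 1) / a1 - a1 \<le> \<bar>U q\<bar> \<and>
                        \<bar>U q\<bar> \<le> a1 * (1 + norm q powr (lam + 1))"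
    and U_grad: "\<forall>q. norm (grad U q) \<le> a1 * (1 + norm q powr lam)"
    and U_coercive: "\<forall>q. grad U q \<bullet> q \<ge> a2 * norm q powr (lam + 1) - a3"
    (* Assumption (G1) *)
    and G_smooth: "smooth_on (UNIV - {0}) G"
    and G_sing: "filterlim G at_top (at 0)"
    and G_even: "\<forall>q. G (- q) = G q"
    and G_grad_odd: "\<forall>q. q \<noteq> 0 \<longrightarrow> grad G (- q) = - grad G q"
    and beta1: "beta1 \<ge> 1"
    and G_bound: "\<forall>q. q \<noteq> 0 \<longrightarrow> \<bar>G q\<bar> \<le> a1 * (1 + norm q + norm q powr (- beta1))"
    and G_grad_bound: "\<forall>q. q \<noteq> 0 \<longrightarrow> norm (grad G q) \<le> a1 * (1 + norm q powr (- beta1))"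
    and beta2: "0 \<le> beta2" "beta2 < beta1"
    and a4: "a4 > 0" and a6: "a6 > 0"
    and G_asym: "\<forall>q. q \<noteq> 0 \<longrightarrow>
        norm (grad G q + (a4 / norm q powr (beta1 + 1)) *\<^sub>R q
                       + (a5 / norm q powr (beta2 + 1)) *\<^sub>R q) \<le> a6"
    (* lower bound of the potential on the configuration space D *)
    and E_ge1: "\<forall>q :: nat \<Rightarrow> 'a. (\<forall>i\<in>{1..N}. \<forall>j\<in>{1..N}. i \<noteq> j \<longrightarrow> q i \<noteq> q j) \<longrightarrow>
        (\<Sum>i=1..N. U (q i)) + (\<Sum>i=1..N. \<Sum>j=i+1..N. G (q i - q j)) \<ge> 1"
  shows "\<exists>cG CG. cG > 0 \<and> CG > 0 \<and>
    (\<forall>q :: nat \<Rightarrow> 'a. (\<forall>i\<in>{1..N}. \<forall>j\<in>{1..N}. i \<noteq> j \<longrightarrow> q i \<noteq> q j) \<longrightarrow>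
       CG * ((\<Sum>i=1..N. U (q i)) + (\<Sum>i=1..N. \<Sum>j=i+1..N. G (q i - q j)))
         \<ge> (\<Sum>i=1..N. norm (q i)) - cG * (\<Sum>i=1..N. \<Sum>j=i+1..N. ln (norm (q i - q j)))
     \<and> (\<Sum>i=1..N. norm (q i)) - cG * (\<Sum>i=1..N. \<Sum>j=i+1..N. ln (norm (q i - q j)))
         \<ge> cG * (\<Sum>i=1..N. norm (q i))
           + cG * Max {- ln (norm (q i - q j)) | i j. 1 \<le> i \<and> i < j \<and> j \<le> N})"
proof -
  define k where "k = a4 / 2"
  have k: "k > 0" using a4 by (simp add: k_def)
  obtain C where GL: "\<forall>q. q \<noteq> 0 \<longrightarrow> - (a4/2) * ln (norm q) \<le> G q + C + a1 * norm q"
    using G_lower[OF G_smooth a1 beta1 beta2 a4 a6 G_bound G_asym] by blast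
  define C0 where "C0 = max C 0"
  have C00: "C0 \<ge> 0" by (simp add: C0_def)
  have GL0: "- k * ln (norm x) \<le> G x + C0 + a1 * norm x" if "x \<noteq> 0" for x
  proof -
    have "- k * ln (norm x) \<le> G x + C + a1 * norm x" using GL that unfolding k_def by blast
    moreover have "C \<le> C0" by (simp add: C0_def)
    ultimately show ?thesis by linarith
  qed
  define Cb where "Cb b = a1 * b^2 / 2 + 1 / (2 * a1) + a1 / 2" for b
  have UL: "b * norm x \<le> U x / 2 + Cb b" for b x
    using U_lin[OF U_ge1 a1 lam U_growth] unfolding Cb_def by blast
  have Cb0: "Cb b \<ge> 0" for b using a1 unfolding Cb_def by (simp add: add_nonneg_nonneg)
  define b1 where "b1 = (a1 + k) * (2 * real N)"
  define P where "P = (\<Sum>i=1..N. \<Sum>j=i+1..N. (1::real))"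
  have P0: "P \<ge> 0" unfolding P_def by (intro sum_nonneg) auto
  define D where "D = 2 + 2 * C0 * P + 2 * real N * Cb b1"
  define cG where "cG = 1 / (2 * real N + 1)"
  define th where "th = cG / k"
  define CG where "CG = (1 + th * 2 * a1 * real N) * (D / 2 + real N * Cb 1) + th + th * C0 * P"
  have cG0: "cG > 0" by (simp add: cG_def add_pos_nonneg)
  have th0: "th > 0" using cG0 k by (simp add: th_def)
  have thk: "th * k = cG" using k by (simp add: th_def)
  have D0: "D \<ge> 2" using C00 P0 Cb0[of b1] by (simp add: D_def)
  have CG0: "CG > 0"
  proof -
    have "0 \<le> (1 + th * 2 * a1 * real N) * (D / 2 + real N * Cb 1)"
      using th0 a1 D0 Cb0[of 1] by (intro mult_nonneg_nonneg add_nonneg_nonneg) auto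
    moreover have "0 \<le> th * C0 * P" using th0 C00 P0 by simp
    ultimately show ?thesis unfolding CG_def using th0 by linarith
  qed
  show ?thesis
  proof (intro exI conjI allI impI)
    show "cG > 0" by (rule cG0)
    show "CG > 0" by (rule CG0)
    fix q :: "nat \<Rightarrow> 'a"
    assume dist: "\<forall>i\<in>{1..N}. \<forall>j\<in>{1..N}. i \<noteq> j \<longrightarrow> q i \<noteq> q j"
    define S where "S = (\<Sum>i=1..N. norm (q i))"
    define SU where "SU = (\<Sum>i=1..N. U (q i))"
    define SG where "SG = (\<Sum>i=1..N. \<Sum>j=i+1..N. G (q i - q j))"
    define L where "L = (\<Sum>i=1..N. \<Sum>j=i+1..N. ln (norm (q i - q j)))"
    define T where "T = (\<Sum>i=1..N. \<Sum>j=i+1..N. norm (q i) + norm (q j))"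
    define E where "E = SU + SG"
    have dnz: "q i - q j \<noteq> 0" if "1 \<le> i" "i < j" "j \<le> N" for i j
      using dist that by auto
    have dle: "norm (q i - q j) \<le> norm (q i) + norm (q j)" for i j
      by (rule norm_triangle_ineq4)
    have TS: "T \<le> 2 * real N * S" unfolding T_def S_def by (rule dsum_T) simp
    have S0: "S \<ge> 0" unfolding S_def by (intro sum_nonneg) auto
    have SU0: "SU \<ge> 0" unfolding SU_def using U_ge1 by (intro sum_nonneg) (smt (verit))
    have E1: "E \<ge> 1" using E_ge1 dist unfolding E_def SU_def SG_def by blast
    have T0: "T \<ge> 0" unfolding T_def by (intro sum_nonneg add_nonneg_nonneg) auto
    have pa: "(- C0) * 1 + (- (a1 + k)) * (norm (q i) + norm (q j)) \<le> G (q i - q j)"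
      if "1 \<le> i" "i < j" "j \<le> N" for i j
    proof -
      let ?d = "norm (q i - q j)"
      have dp: "?d > 0" using dnz[OF that] by simp
      have "ln ?d \<le> ?d" using ln_le_minus_one[OF dp] by linarith
      then have "- k * ?d \<le> - k * ln ?d" using k by simp
      moreover have "(a1 + k) * ?d \<le> (a1 + k) * (norm (q i) + norm (q j))"
        using a1 k dle by (intro mult_left_mono) auto
      ultimately show ?thesis using GL0[OF dnz[OF that]] by (simp add: algebra_simps)
    qed
    have SGlow: "(- C0) * P + (- (a1 + k)) * T \<le> SG"
    proof -
      have "(\<Sum>i=1..N. \<Sum>j=i+1..N. (- C0) * 1 + (- (a1 + k)) * (norm (q i) + norm (q j))) \<le> SG"
        unfolding SG_def by (rule dsum_mono) (rule pa)
      then show ?thesis unfolding P_def T_def by (simp only: dsum_lin2)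
    qed
    have pb: "(- cG) * ln (norm (q i - q j)) \<le> th * G (q i - q j) + (th * C0) * 1 + (th * a1) * (norm (q i) + norm (q j))"
      if "1 \<le> i" "i < j" "j \<le> N" for i j
    proof -
      let ?d = "norm (q i - q j)"
      have "th * (- k * ln ?d) \<le> th * (G (q i - q j) + C0 + a1 * ?d)"
        using GL0[OF dnz[OF that]] th0 by (intro mult_left_mono) auto
      moreover have "th * (a1 * ?d) \<le> th * (a1 * (norm (q i) + norm (q j)))"
        using dle th0 a1 by (intro mult_left_mono) auto
      moreover have "(- cG) * ln ?d = th * (- k * ln ?d)" using thk by (simp add: algebra_simps)
      moreover have "th * (G (q i - q j) + C0 + a1 * ?d) = th * G (q i - q j) + (th * C0) * 1 + th * (a1 * ?d)"
        by (simp add: algebra_simps)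
      moreover have "th * (a1 * (norm (q i) + norm (q j))) = (th * a1) * (norm (q i) + norm (q j))"
        by (simp add: algebra_simps)
      ultimately show ?thesis by linarith
    qed
    have Lup: "(- cG) * L \<le> th * SG + (th * C0) * P + (th * a1) * T"
    proof -
      have "(\<Sum>i=1..N. \<Sum>j=i+1..N. (- cG) * ln (norm (q i - q j))) \<le>
            (\<Sum>i=1..N. \<Sum>j=i+1..N. th * G (q i - q j) + (th * C0) * 1 + (th * a1) * (norm (q i) + norm (q j)))"
        by (rule dsum_mono) (rule pb)
      moreover have "(\<Sum>i=1..N. \<Sum>j=i+1..N. (- cG) * ln (norm (q i - q j))) = (- cG) * L"
        unfolding L_def by (simp add: sum_distrib_left)
      ultimately show ?thesis unfolding P_def T_def SG_def by (simp only: dsum_lin3)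
    qed
    define M0 where "M0 = (\<Sum>i=1..N. \<Sum>j=i+1..N. max 0 (- ln (norm (q i - q j))))"
    have pc: "1 * max 0 (- ln (norm (q i - q j))) + (-1) * (norm (q i) + norm (q j)) \<le> - ln (norm (q i - q j))"
      if "1 \<le> i" "i < j" "j \<le> N" for i j
    proof -
      let ?d = "norm (q i - q j)"
      have dp: "?d > 0" using dnz[OF that] by simp
      have "ln ?d \<le> ?d" using ln_le_minus_one[OF dp] by linarith
      then show ?thesis using dle[of i j] norm_ge_zero[of "q i"] norm_ge_zero[of "q j"] by (simp add: max_def) (smt (verit) norm_ge_zero)
    qed
    have Llow: "M0 - T \<le> - L"
    proof -
      have "(\<Sum>i=1..N. \<Sum>j=i+1..N. 1 * max 0 (- ln (norm (q i - q j))) + (-1) * (norm (q i) + norm (q j))) \<le>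
            (\<Sum>i=1..N. \<Sum>j=i+1..N. - ln (norm (q i - q j)))"
        by (rule dsum_mono) (rule pc)
      moreover have "(\<Sum>i=1..N. \<Sum>j=i+1..N. - ln (norm (q i - q j))) = - L"
        unfolding L_def by (simp add: sum_negf)
      ultimately show ?thesis unfolding M0_def T_def by (simp only: dsum_lin2)
    qed
    define MS where "MS = {- ln (norm (q i - q j)) | i j. 1 \<le> i \<and> i < j \<and> j \<le> N}"
    have MSfin: "finite MS"
    proof (rule finite_subset)
      show "MS \<subseteq> (\<lambda>(i,j). - ln (norm (q i - q j))) ` ({1..N} \<times> {1..N})"
        unfolding MS_def by force
    qed auto
    have MSne: "MS \<noteq> {}"
    proof -
      have "- ln (norm (q 1 - q 2)) \<in> MS" unfolding MS_def using N by force
      then show ?thesis by blast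
    qed
    have MM0: "Max MS \<le> M0"
    proof -
      have "Max MS \<in> MS" using MSfin MSne by (rule Max_in)
      then obtain i0 j0 where ij: "Max MS = - ln (norm (q i0 - q j0))" "1 \<le> i0" "i0 < j0" "j0 \<le> N"
        unfolding MS_def by blast
      have "max 0 (- ln (norm (q i0 - q j0))) \<le> M0"
        unfolding M0_def by (rule dsum_member[OF _ ij(2-4)]) simp
      then show ?thesis using ij(1) by linarith
    qed
    have Ub: "b * S \<le> SU / 2 + real N * Cb b" for b
    proof -
      have "(\<Sum>i=1..N. b * norm (q i)) \<le> (\<Sum>i=1..N. U (q i) / 2 + Cb b)"
        by (intro sum_mono UL)
      then show ?thesis unfolding S_def SU_def by (simp add: sum.distrib sum_distrib_left sum_divide_distrib)
    qed
    have bT: "(a1 + k) * T \<le> b1 * S"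
    proof -
      have "(a1 + k) * T \<le> (a1 + k) * (2 * real N * S)" using TS a1 k by (intro mult_left_mono) auto
      then show ?thesis unfolding b1_def by (simp add: algebra_simps)
    qed
    have SUE: "SU \<le> D * E"
    proof -
      have "SU \<le> 2 * E + (2 * C0 * P + 2 * real N * Cb b1)"
        using SGlow bT Ub[of b1] unfolding E_def by (simp add: algebra_simps)
      moreover have "(2 * C0 * P + 2 * real N * Cb b1) \<le> (2 * C0 * P + 2 * real N * Cb b1) * E"
        using E1 C00 P0 Cb0[of b1] by (intro le_mult_E) auto
      ultimately show ?thesis unfolding D_def by (simp add: algebra_simps)
    qed
    have SE: "S \<le> (D / 2 + real N * Cb 1) * E"
    proof -
      have "S \<le> SU / 2 + real N * Cb 1" using Ub[of 1] by simp
      moreover have "real N * Cb 1 \<le> real N * Cb 1 * E"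
        using E1 Cb0[of 1] by (intro le_mult_E) auto
      ultimately show ?thesis using SUE by (simp add: algebra_simps)
    qed
    have part1: "S - cG * L \<le> CG * E"
    proof -
      have "th * a1 * T \<le> th * a1 * (2 * real N * S)" using TS th0 a1 by (intro mult_left_mono) auto
      then have "S - cG * L \<le> (1 + th * 2 * a1 * real N) * S + th * SG + th * C0 * P"
        using Lup by (simp add: algebra_simps)
      also have "\<dots> \<le> (1 + th * 2 * a1 * real N) * ((D / 2 + real N * Cb 1) * E) + th * E + th * C0 * P * E"
      proof -
        have "(1 + th * 2 * a1 * real N) * S \<le> (1 + th * 2 * a1 * real N) * ((D / 2 + real N * Cb 1) * E)"
          using SE th0 a1 by (intro mult_left_mono) auto
        moreover have "th * SG \<le> th * E" using SU0 th0 unfolding E_def by simp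
        moreover have "th * C0 * P \<le> th * C0 * P * E"
          using E1 th0 C00 P0 by (intro le_mult_E) auto
        ultimately show ?thesis by linarith
      qed
      also have "\<dots> = CG * E" unfolding CG_def by (simp add: algebra_simps)
      finally show ?thesis .
    qed
    have part2: "cG * S + cG * Max MS \<le> S - cG * L"
    proof -
      have "cG * Max MS \<le> cG * M0" using MM0 cG0 by simp
      moreover have "cG * T \<le> cG * (2 * real N * S)" using TS cG0 by simp
      moreover have "cG * (M0 - T) \<le> cG * (- L)" using Llow cG0 by (intro mult_left_mono) auto
      moreover have "S = cG * S + cG * (2 * real N * S)"
      proof -
        have c1: "cG * (2 * real N + 1) = 1" unfolding cG_def by (simp add: add_pos_nonneg)
        have "cG * S + cG * (2 * real N * S) = (cG * (2 * real N + 1)) * S" by (simp add: algebra_simps)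
        then show ?thesis using c1 by simp
      qed
      ultimately show ?thesis by (simp add: algebra_simps)
    qed
    show "CG * ((\<Sum>i=1..N. U (q i)) + (\<Sum>i=1..N. \<Sum>j=i+1..N. G (q i - q j)))
         \<ge> (\<Sum>i=1..N. norm (q i)) - cG * (\<Sum>i=1..N. \<Sum>j=i+1..N. ln (norm (q i - q j)))"
      using part1 unfolding E_def SU_def SG_def S_def L_def .
    show "(\<Sum>i=1..N. norm (q i)) - cG * (\<Sum>i=1..N. \<Sum>j=i+1..N. ln (norm (q i - q j)))
         \<ge> cG * (\<Sum>i=1..N. norm (q i))
           + cG * Max {- ln (norm (q i - q j)) | i j. 1 \<le> i \<and> i < j \<and> j \<le> N}"
      using part2 unfolding MS_def S_def L_def .
  qed
qed

end
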